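(* Let $p\ge1$ and $q\le k$ be reals such that $\frac kp+\frac{pq}2\le k$. For any set family $\mathcal S\subseteq2^{[k]}$ such that $|S|\ge\frac kp+\frac{pq}2$ for every $S\in\mathcal S$ and $|S\cap S'|\le q$ for any two distinct $S,S'\in\mathcal S$, it holds that $|\mathcal S|\le p$.
   Context: $[k]=\{1,\dots,k\}$ and $2^{[k]}$ is its power set. *)

theory Defs
  imports Main Complex_Main
begin

end

theory Submission
  imports Defs
begin

lemma union_bound:
  fixes q :: real
  assumes "finite F" "\<forall>A\<in>F. finite A"
    and "\<forall>A\<in>F. \<forall>B\<in>F. A \<noteq> B \<longrightarrow> real (card (A \<inter> B)) \<le> q"
  shows "real (card (\<Union>F)) \<ge> (\<Sum>A\<in>F. real (card A)) - real (card F) * (real (card F) - 1) / 2 * q"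
  using assms
proof (induction F rule: finite_induct)
  case empty
  then show ?case by simp
next
  case (insert B F)
  let ?c = "real (card F)"
  have fin: "finite (\<Union>F)" using insert by auto
  have finB: "finite B" using insert by auto
  have IH: "real (card (\<Union>F)) \<ge> (\<Sum>A\<in>F. real (card A)) - ?c * (?c - 1) / 2 * q"
    using insert by auto
  have eq: "card (B \<union> \<Union>F) + card (B \<inter> \<Union>F) = card B + card (\<Union>F)"
    using card_Un_Int[OF finB fin] by simp
  have "B \<inter> \<Union>F = (\<Union>A\<in>F. B \<inter> A)" by auto
  hence "card (B \<inter> \<Union>F) \<le> (\<Sum>A\<in>F. card (B \<inter> A))"
    using card_UN_le[OF insert(1)] by metis
  hence "real (card (B \<inter> \<Union>F)) \<le> (\<Sum>A\<in>F. real (card (B \<inter> A)))"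
    by (metis of_nat_le_iff of_nat_sum)
  also have "\<dots> \<le> (\<Sum>A\<in>F. q)"
    apply (rule sum_mono) using insert by auto
  also have "\<dots> = ?c * q" by simp
  finally have I: "real (card (B \<inter> \<Union>F)) \<le> ?c * q" .
  have eqr: "real (card (B \<union> \<Union>F)) = real (card B) + real (card (\<Union>F)) - real (card (B \<inter> \<Union>F))"
    using eq by (metis add_diff_cancel_right' of_nat_add)
  have "card (insert B F) = card F + 1" using insert by simp
  moreover have "(\<Sum>A\<in>insert B F. real (card A)) = real (card B) + (\<Sum>A\<in>F. real (card A))"
    using insert by simp
  moreover have "?c * (?c - 1) / 2 * q + ?c * q = (?c + 1) * (?c + 1 - 1) / 2 * q"
    by (simp add: field_simps)
  ultimately have "real (card (insert B F)) = ?c + 1" by simp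
  moreover have "\<Union>(insert B F) = B \<union> \<Union>F" by simp
  ultimately show ?case using eqr IH I
    \<open>(\<Sum>A\<in>insert B F. real (card A)) = real (card B) + (\<Sum>A\<in>F. real (card A))\<close>
    \<open>?c * (?c - 1) / 2 * q + ?c * q = (?c + 1) * (?c + 1 - 1) / 2 * q\<close>
    by (simp only:)
qed

theorem lemma3p8:
  fixes k :: nat and p q :: real and \<S> :: "nat set set"
  assumes "p \<ge> 1" and "q \<le> real k"
    and "real k / p + p * q / 2 \<le> real k"
    and "\<S> \<subseteq> Pow {1..k}"
    and "\<forall>S\<in>\<S>. real (card S) \<ge> real k / p + p * q / 2"
    and "\<forall>S\<in>\<S>. \<forall>S'\<in>\<S>. S \<noteq> S' \<longrightarrow> real (card (S \<inter> S')) \<le> q"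
  shows "real (card \<S>) \<le> p"
proof (rule ccontr)
  assume H: "\<not> real (card \<S>) \<le> p"
  have finS: "finite \<S>" using assms(4) finite_subset by (metis finite_Pow_iff finite_atLeastAtMost)
  have fins: "\<forall>A\<in>\<S>. finite A" using assms(4) by (meson PowD finite_atLeastAtMost finite_subset subsetD)
  have c2: "card \<S> \<ge> 2" using H assms(1) by linarith
  have q0: "q \<ge> 0"
  proof -
    obtain A B where "A \<in> \<S>" "B \<in> \<S>" "A \<noteq> B"
    proof -
      obtain A where A: "A \<in> \<S>" using c2 by fastforce
      have "card (\<S> - {A}) \<ge> 1" using c2 A finS by simp
      hence "\<S> - {A} \<noteq> {}" by (metis card.empty not_one_le_zero)
      then obtain B where "B \<in> \<S> - {A}" by blast
      thus ?thesis using A that by blast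
    qed
    thus ?thesis using assms(6) by (metis of_nat_0_le_iff order_trans)
  qed
  have k0: "k > 0"
  proof (rule ccontr)
    assume "\<not> k > 0"
    hence "\<S> \<subseteq> {{}}" using assms(4) by auto
    hence "card \<S> \<le> 1" using card_mono[of "{{}}" \<S>] by simp
    thus False using c2 by simp
  qed
  define n where "n = nat (floor p) + 1"
  have np: "real n > p" unfolding n_def using assms(1) by linarith
  have np2: "real n \<le> p + 1" unfolding n_def using assms(1) by linarith
  have "floor p < int (card \<S>)" using H by (simp add: floor_less_iff)
  moreover have "0 \<le> floor p" using assms(1) by simp
  ultimately have "n \<le> card \<S>" unfolding n_def by linarith
  then obtain F where F: "F \<subseteq> \<S>" "card F = n"
    using obtain_subset_with_card_n by metis
  have finF: "finite F" using F finS finite_subset by auto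
  have UB: "real (card (\<Union>F)) \<le> real k"
  proof -
    have "\<Union>F \<subseteq> {1..k}" using F assms(4) by auto
    hence "card (\<Union>F) \<le> card {1..k}" by (metis card_mono finite_atLeastAtMost)
    thus ?thesis by simp
  qed
  have LB: "real (card (\<Union>F)) \<ge> (\<Sum>A\<in>F. real (card A)) - real n * (real n - 1) / 2 * q"
    using union_bound[OF finF] F fins assms(6) by (metis subsetD)
  have "(\<Sum>A\<in>F. real (card A)) \<ge> (\<Sum>A\<in>F. real k / p + p * q / 2)"
    apply (rule sum_mono) using F assms(5) by auto
  hence S: "(\<Sum>A\<in>F. real (card A)) \<ge> real n * (real k / p + p * q / 2)" using F by simp
  have "real n * (real k / p + p * q / 2) - real n * (real n - 1) / 2 * q
      = real n * real k / p + real n * q * (p + 1 - real n) / 2"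
    by (simp add: algebra_simps add_divide_distrib diff_divide_distrib)
  also have "\<dots> \<ge> real n * real k / p"
    using q0 np2 np by (simp add: mult_nonneg_nonneg)
  finally have A: "real n * (real k / p + p * q / 2) - real n * (real n - 1) / 2 * q \<ge> real n * real k / p" .
  have "real n * real k / p > real k"
    using np k0 assms(1) by (simp add: pos_less_divide_eq)
  thus False using A S LB UB by linarith
qed

end
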